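(* Let $\mathcal{E}=\langle\mathrm{Env},A,\Rightarrow\rangle$ be an environment LTS and $\mathcal{P}=\langle\mathrm{Pr},A,\to\rangle$ a process LTS such that $\mathcal{P}$ contains a universal process, contains $\mathcal{E}$ (i.e. $\mathrm{Env}\subseteq\mathrm{Pr}$ with the same transitions), and is closed under joins. Then for all environments $e,f\in\mathrm{Env}$ (not necessarily image-finite): (1) $e\le f \iff\ \le^{ji}_f\ \subseteq\ \le^{ji}_e$; (2) $e\le f \iff\ \ge^{ji}_f\ \subseteq\ \ge^{ji}_e$, where $\ge^{ji}_g$ is the converse of $\le^{ji}_g$; (3) $e\le f \iff\ \simeq^{ji}_f\ \subseteq\ \simeq^{ji}_e$.
   Context: A labeled transition system (LTS) is a triple $\langle \mathrm{St},A,\to\rangle$ with states, actions, and transitions $s\xrightarrow{a}t$. A process LTS $\mathcal{P}=\langle \mathrm{Pr},A,\to\rangle$ has states called processes; an environment LTS $\mathcal{E}=\langle\mathrm{Env},A,\Rightarrow\rangle$ has states called environments, transitions $e\xRightarrow{a}e'$. A simulation is a nonempty relation $S$ on states such that $s\,S\,t$ and $s\xrightarrow{a}s'$ imply some $t\xrightarrow{a}t'$ with $s'\,S\,t'$; $s\le t$ iff some simulation relates $s$ to $t$; a bisimulation is a relation $B$ with $B$ and its converse simulations, and $\sim$ is bisimilarity. A process $u\in\mathrm{Pr}$ is universal if for every $a\in A$ there is a transition $u\xrightarrow{a}u'$ with $u'\sim u$. $\mathcal{P}$ is closed under joins if for all $s_1,s_2\in\mathrm{Pr}$ there is $s_1\mathbin{\&}s_2\in\mathrm{Pr}$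 whose transitions are exactly $s_1\mathbin{\&}s_2\xrightarrow{a}s_1'\mathbin{\&}s_2'$ for $s_1\xrightarrow{a}s_1'$, $s_2\xrightarrow{a}s_2'$. The join LTS $\mathcal{P}\mathbin{\&}\mathcal{E}$ has states $p\mathbin{\&}e$ and transitions $p\mathbin{\&}e\xrightarrow{a}p'\mathbin{\&}e'$ iff $p\xrightarrow{a}p'$ and $e\xRightarrow{a}e'$. $p\le^{ji}_e q$ iff $p\mathbin{\&}e\le q\mathbin{\&}e$; $p\simeq^{ji}_e q$ iff $p\le^{ji}_e q$ and $q\le^{ji}_e p$. *)

theory Defs
  imports Main
begin

(* An LTS over state type 's and action type 'a is given by its transition
   relation T :: 's => 'a => 's => bool; the set of actions A is UNIV :: 'a set. *)

definition simulation :: "('s \<Rightarrow> 'a \<Rightarrow> 's \<Rightarrow> bool) \<Rightarrow> ('s \<times> 's) set \<Rightarrow> bool" where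
  "simulation T S \<longleftrightarrow> S \<noteq> {} \<and>
     (\<forall>s t a s'. (s, t) \<in> S \<longrightarrow> T s a s' \<longrightarrow> (\<exists>t'. T t a t' \<and> (s', t') \<in> S))"

definition sim_le :: "('s \<Rightarrow> 'a \<Rightarrow> 's \<Rightarrow> bool) \<Rightarrow> 's \<Rightarrow> 's \<Rightarrow> bool" where
  "sim_le T s t \<longleftrightarrow> (\<exists>S. simulation T S \<and> (s, t) \<in> S)"

definition bisimilar :: "('s \<Rightarrow> 'a \<Rightarrow> 's \<Rightarrow> bool) \<Rightarrow> 's \<Rightarrow> 's \<Rightarrow> bool" where
  "bisimilar T s t \<longleftrightarrow> (\<exists>B. simulation T B \<and> simulation T (B\<inverse>) \<and> (s, t) \<in> B)"

definition universal :: "('p \<Rightarrow> 'a \<Rightarrow> 'p \<Rightarrow> bool) \<Rightarrow> 'p \<Rightarrow> bool" where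
  "universal T u \<longleftrightarrow> (\<forall>a. \<exists>u'. T u a u' \<and> bisimilar T u' u)"

definition join_op :: "('p \<Rightarrow> 'a \<Rightarrow> 'p \<Rightarrow> bool) \<Rightarrow> ('p \<Rightarrow> 'p \<Rightarrow> 'p) \<Rightarrow> bool" where
  "join_op T jn \<longleftrightarrow> (\<forall>s1 s2 a t. T (jn s1 s2) a t \<longleftrightarrow>
      (\<exists>s1' s2'. T s1 a s1' \<and> T s2 a s2' \<and> t = jn s1' s2'))"

(* Environment LTS: states Env, a subset of the processes, with the same
   transitions as the process LTS (hence Env is closed under transitions). *)
definition env_trans :: "('p \<Rightarrow> 'a \<Rightarrow> 'p \<Rightarrow> bool) \<Rightarrow> 'p set \<Rightarrow> 'p \<Rightarrow> 'a \<Rightarrow> 'p \<Rightarrow> bool" where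
  "env_trans T Env e a e' \<longleftrightarrow> e \<in> Env \<and> e' \<in> Env \<and> T e a e'"

(* The join LTS P & E: states are formal pairs (p, e) *)
definition join_lts :: "('p \<Rightarrow> 'a \<Rightarrow> 'p \<Rightarrow> bool) \<Rightarrow> 'p set \<Rightarrow> ('p \<times> 'p) \<Rightarrow> 'a \<Rightarrow> ('p \<times> 'p) \<Rightarrow> bool" where
  "join_lts T Env pe a pe' \<longleftrightarrow> T (fst pe) a (fst pe') \<and> env_trans T Env (snd pe) a (snd pe')"

definition ji_le :: "('p \<Rightarrow> 'a \<Rightarrow> 'p \<Rightarrow> bool) \<Rightarrow> 'p set \<Rightarrow> 'p \<Rightarrow> ('p \<times> 'p) set" where
  "ji_le T Env e = {(p, q). sim_le (join_lts T Env) (p, e) (q, e)}"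

definition ji_eq :: "('p \<Rightarrow> 'a \<Rightarrow> 'p \<Rightarrow> bool) \<Rightarrow> 'p set \<Rightarrow> 'p \<Rightarrow> ('p \<times> 'p) set" where
  "ji_eq T Env e = ji_le T Env e \<inter> (ji_le T Env e)\<inverse>"

end

theory Submission
  imports Defs
begin

lemma sim_leI:
  assumes "(s, t) \<in> R"
    and "\<And>s t a s'. (s, t) \<in> R \<Longrightarrow> T s a s' \<Longrightarrow> \<exists>t'. T t a t' \<and> (s', t') \<in> R"
  shows "sim_le T s t"
  unfolding sim_le_def simulation_def using assms by blast

lemma sim_leD:
  assumes "sim_le T s t" "T s a s'"
  shows "\<exists>t'. T t a t' \<and> sim_le T s' t'"
  using assms unfolding sim_le_def simulation_def by blast

lemma sim_le_refl: "sim_le T s s"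
  proof (rule sim_leI[where R=Id])
  show "(s, s) \<in> Id" by simp
next
  fix s t a s' assume "(s, t) \<in> Id" "T s a s'"
  thus "\<exists>t'. T t a t' \<and> (s', t') \<in> Id" by simp
qed

lemma sim_le_trans:
  assumes "sim_le T x y" "sim_le T y z"
  shows "sim_le T x z"
proof (rule sim_leI[where R="{(x,z). \<exists>y. sim_le T x y \<and> sim_le T y z}"])
  show "(x, z) \<in> {(x,z). \<exists>y. sim_le T x y \<and> sim_le T y z}" using assms by blast
next
  fix s t a s'
  assume "(s, t) \<in> {(x,z). \<exists>y. sim_le T x y \<and> sim_le T y z}" "T s a s'"
  then obtain y where y: "sim_le T s y" "sim_le T y t" by blast
  obtain y' where y': "T y a y'" "sim_le T s' y'" using sim_leD[OF y(1) \<open>T s a s'\<close>] by blast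
  obtain t' where "T t a t'" "sim_le T y' t'" using sim_leD[OF y(2) y'(1)] by blast
  with y'(2) show "\<exists>t'. T t a t' \<and> (s', t') \<in> {(x,z). \<exists>y. sim_le T x y \<and> sim_le T y z}" by blast
qed

lemma univ_step:
  assumes "universal T u" "sim_le T u x"
  shows "\<exists>x'. T x a x' \<and> sim_le T u x'"
proof -
  obtain u' where u': "T u a u'" "bisimilar T u' u" using assms(1) unfolding universal_def by blast
  then obtain B where "simulation T (B\<inverse>)" "(u', u) \<in> B" unfolding bisimilar_def by blast
  hence "sim_le T u u'" unfolding sim_le_def by (intro exI[of _ "B\<inverse>"]) simp
  obtain x' where "T x a x'" "sim_le T u' x'" using sim_leD[OF assms(2) u'(1)] by blast
  thus ?thesis using sim_le_trans[OF \<open>sim_le T u u'\<close>] by blast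
qed

theorem theorem3p14:
  fixes T :: "'p \<Rightarrow> 'a \<Rightarrow> 'p \<Rightarrow> bool" and Env :: "'p set"
    and jn :: "'p \<Rightarrow> 'p \<Rightarrow> 'p" and e f :: 'p
  assumes univ: "\<exists>u. universal T u"
    and env_closed: "\<And>x a y. x \<in> Env \<Longrightarrow> T x a y \<Longrightarrow> y \<in> Env"
    and joins: "join_op T jn"
    and e: "e \<in> Env" and f: "f \<in> Env"
  shows "(sim_le (env_trans T Env) e f \<longleftrightarrow> ji_le T Env f \<subseteq> ji_le T Env e)
       \<and> (sim_le (env_trans T Env) e f \<longleftrightarrow> (ji_le T Env f)\<inverse> \<subseteq> (ji_le T Env e)\<inverse>)
       \<and> (sim_le (env_trans T Env) e f \<longleftrightarrow> ji_eq T Env f \<subseteq> ji_eq T Env e)"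
proof -
  obtain u where u: "universal T u" using univ by blast
  let ?E = "env_trans T Env"
  let ?J = "join_lts T Env"
  have fwd: "ji_le T Env f \<subseteq> ji_le T Env e" if ef: "sim_le ?E e f"
  proof
    fix pq assume "pq \<in> ji_le T Env f"
    then obtain p q where pq: "pq = (p, q)" "sim_le ?J (p, f) (q, f)" unfolding ji_le_def by auto
    have "sim_le ?J (p, e) (p, f)"
    proof (rule sim_leI[where R="{((p1,e1),(p2,f1)). p1 = p2 \<and> sim_le ?E e1 f1}"])
      show "((p, e), (p, f)) \<in> {((p1,e1),(p2,f1)). p1 = p2 \<and> sim_le ?E e1 f1}" using ef by simp
    next
      fix s t a s'
      assume st: "(s, t) \<in> {((p1,e1),(p2,f1)). p1 = p2 \<and> sim_le ?E e1 f1}" and "?J s a s'"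
      then obtain p1 e1 f1 p1' e1' where eq: "s = (p1, e1)" "t = (p1, f1)" "s' = (p1', e1')"
        and sl: "sim_le ?E e1 f1" and tr: "T p1 a p1'" "?E e1 a e1'"
        unfolding join_lts_def by (cases s; cases t; cases s') auto
      obtain f1' where "?E f1 a f1'" "sim_le ?E e1' f1'" using sim_leD[OF sl tr(2)] by blast
      thus "\<exists>t'. ?J t a t' \<and> (s', t') \<in> {((p1,e1),(p2,f1)). p1 = p2 \<and> sim_le ?E e1 f1}"
        using eq tr by (intro exI[of _ "(p1', f1')"]) (simp add: join_lts_def)
    qed
    hence pe: "sim_le ?J (p, e) (q, f)" using sim_le_trans[OF _ pq(2)] by blast
    let ?R = "{((p1,e1),(q1,e2)). \<exists>f2. sim_le ?J (p1,e1) (q1,f2) \<and> sim_le ?E e1 e2}"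
    have "sim_le ?J (p, e) (q, e)"
    proof (rule sim_leI[where R="?R"])
      show "((p, e), (q, e)) \<in> ?R" using pe sim_le_refl[of ?E e] by blast
    next
      fix s t a s'
      assume st: "(s, t) \<in> ?R" and tr: "?J s a s'"
      then obtain p1 e1 q1 e2 p1' e1' f2 where eq: "s = (p1, e1)" "t = (q1, e2)" "s' = (p1', e1')"
        and j: "sim_le ?J (p1,e1) (q1,f2)" and sl: "sim_le ?E e1 e2"
        by (cases s; cases t; cases s') auto
      have "?E e1 a e1'" using tr eq unfolding join_lts_def by simp
      then obtain e2' where e2': "?E e2 a e2'" "sim_le ?E e1' e2'" using sim_leD[OF sl] by blast
      obtain t' where t': "?J (q1, f2) a t'" "sim_le ?J s' t'" using sim_leD[OF j] tr eq by blast
      obtain q1' f2' where "t' = (q1', f2')" by (cases t')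
      with t' e2' eq show "\<exists>t'. ?J t a t' \<and> (s', t') \<in> ?R"
        by (intro exI[of _ "(q1', e2')"]) (auto simp: join_lts_def)
    qed
    thus "pq \<in> ji_le T Env e" using pq unfolding ji_le_def by simp
  qed
  have pg: "sim_le ?J (p1, g) (g, g)" for g p1
  proof (rule sim_leI[where R="{((p1,g1),(g2,g3)). g2 = g3 \<and> sim_le ?E g1 g2}"])
    show "((p1, g), (g, g)) \<in> {((p1,g1),(g2,g3)). g2 = g3 \<and> sim_le ?E g1 g2}"
      using sim_le_refl by simp
  next
    fix s t a s'
    assume "(s, t) \<in> {((p1,g1),(g2,g3)). g2 = g3 \<and> sim_le ?E g1 g2}"
      and tr: "?J s a s'"
    then obtain v g1 g2 v' g1' where eq: "s = (v, g1)" "t = (g2, g2)" "s' = (v', g1')"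
      and sl: "sim_le ?E g1 g2"
      by (cases s; cases t; cases s') auto
    have "?E g1 a g1'" using tr eq unfolding join_lts_def by auto
    then obtain g2' where "?E g2 a g2'" "sim_le ?E g1' g2'" using sim_leD[OF sl] by blast
    thus "\<exists>t'. ?J t a t' \<and> (s', t') \<in> {((p1,g1),(g2,g3)). g2 = g3 \<and> sim_le ?E g1 g2}"
      using eq by (intro exI[of _ "(g2', g2')"]) (auto simp: join_lts_def env_trans_def)
  qed
  have xu: "sim_le ?J (x, y) (u, y)" for x y
  proof (rule sim_leI[where R="{((x1,y1),(u1,y2)). y1 = y2 \<and> sim_le T u u1}"])
    show "((x, y), (u, y)) \<in> {((x1,y1),(u1,y2)). y1 = y2 \<and> sim_le T u u1}"
      using sim_le_refl by simp
  next
    fix s t a s'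
    assume "(s, t) \<in> {((x1,y1),(u1,y2)). y1 = y2 \<and> sim_le T u u1}"
      and tr: "?J s a s'"
    then obtain v y1 u1 v' y1' where eq: "s = (v, y1)" "t = (u1, y1)" "s' = (v', y1')"
      and sl: "sim_le T u u1"
      by (cases s; cases t; cases s') auto
    obtain u1' where "T u1 a u1'" "sim_le T u u1'" using univ_step[OF u sl] by blast
    thus "\<exists>t'. ?J t a t' \<and> (s', t') \<in> {((x1,y1),(u1,y2)). y1 = y2 \<and> sim_le T u u1}"
      using eq tr by (intro exI[of _ "(u1', y1')"]) (auto simp: join_lts_def)
  qed
  have bwd0: "sim_le ?E e f" if h: "sim_le ?J (u, e) (f, e)"
  proof (rule sim_leI[where R="{(e1,f1). e1 \<in> Env \<and> f1 \<in> Env \<and> (\<exists>u1 e2. sim_le T u u1 \<and> sim_le ?J (u1, e1) (f1, e2))}"])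
    show "(e, f) \<in> {(e1,f1). e1 \<in> Env \<and> f1 \<in> Env \<and> (\<exists>u1 e2. sim_le T u u1 \<and> sim_le ?J (u1, e1) (f1, e2))}"
      using e f h sim_le_refl[of T u] by blast
  next
    fix s t a s'
    assume "(s, t) \<in> {(e1,f1). e1 \<in> Env \<and> f1 \<in> Env \<and> (\<exists>u1 e2. sim_le T u u1 \<and> sim_le ?J (u1, e1) (f1, e2))}"
      and tr: "?E s a s'"
    then obtain u1 e2 where sE: "s \<in> Env" "t \<in> Env" and su: "sim_le T u u1"
      and j: "sim_le ?J (u1, s) (t, e2)" by blast
    obtain u1' where u1': "T u1 a u1'" "sim_le T u u1'" using univ_step[OF u su] by blast
    have "?J (u1, s) a (u1', s')" using u1' tr by (simp add: join_lts_def)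
    then obtain t' where t': "?J (t, e2) a t'" "sim_le ?J (u1', s') t'" using sim_leD[OF j] by blast
    obtain f1' e2' where teq: "t' = (f1', e2')" by (cases t')
    have "T t a f1'" using t' teq by (simp add: join_lts_def)
    hence "?E t a f1'" "f1' \<in> Env" using sE env_closed by (auto simp: env_trans_def)
    moreover have "s' \<in> Env" using tr by (simp add: env_trans_def)
    ultimately show "\<exists>t'. ?E t a t' \<and> (s', t') \<in> {(e1,f1). e1 \<in> Env \<and> f1 \<in> Env \<and> (\<exists>u1 e2. sim_le T u u1 \<and> sim_le ?J (u1, e1) (f1, e2))}"
      using t' teq u1' by blast
  qed
  have uf: "(u, f) \<in> ji_le T Env f" using pg unfolding ji_le_def by simp
  have uf2: "(u, f) \<in> ji_eq T Env f" using pg xu unfolding ji_eq_def ji_le_def by simp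
  have bwd: "sim_le ?E e f" if "(u, f) \<in> ji_le T Env e"
    using bwd0 that unfolding ji_le_def by simp
  have A: "sim_le ?E e f \<longleftrightarrow> ji_le T Env f \<subseteq> ji_le T Env e"
    using fwd bwd uf by blast
  have B: "ji_eq T Env f \<subseteq> ji_eq T Env e" if "sim_le ?E e f"
    using fwd[OF that] unfolding ji_eq_def by blast
  have C: "sim_le ?E e f" if "ji_eq T Env f \<subseteq> ji_eq T Env e"
    using that uf2 bwd unfolding ji_eq_def by blast
  have D: "((ji_le T Env f)\<inverse> \<subseteq> (ji_le T Env e)\<inverse>) = (ji_le T Env f \<subseteq> ji_le T Env e)"
    by (rule converse_mono)
  show ?thesis using A B C unfolding D by blast
qed

end
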